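(* Let $q$ be a real number with $|q|<1$, let $\mathcal{A}$ be the algebra of linear operators on $\mathbb{C}[x,s]$, and let $A,B\in\mathcal{A}$ satisfy $BA=qAB$. Then, as an identity of formal power series in a central indeterminate $z$ with coefficients in $\mathcal{A}$, $$e_{q^2}\big(z(A+B)^2\big)=e_{q^2}(zA^2)\,e_q(zAB)\,e_{q^2}(zB^2).$$
   Context: For $|q|<1$, $(x;q)_n=\prod_{j=0}^{n-1}(1-q^jx)$, and $e_q(w)=\sum_{n\ge0}\frac{w^n}{(q;q)_n}$ (interpreted as a formal power series; for an operator argument $w=zC$ this is $\sum_{n\ge 0} \frac{z^nC^n}{(q;q)_n}$). *)

theory Defs
  imports "HOL-Computational_Algebra.Polynomial" "HOL-Computational_Algebra.Formal_Power_Series"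
begin

text \<open>The polynomial ring C[x,s], realised as (C[x])[s].\<close>
type_synonym cxs = "complex poly poly"

definition cscale :: "complex \<Rightarrow> cxs \<Rightarrow> cxs" where
  "cscale c v = smult [:c:] v"

definition clinear :: "(cxs \<Rightarrow> cxs) \<Rightarrow> bool" where
  "clinear T \<longleftrightarrow> (\<forall>u v. T (u + v) = T u + T v) \<and> (\<forall>c u. T (cscale c u) = cscale c (T u))"

lemma clinear_id: "clinear id" by (simp add: clinear_def)
lemma clinear_zero: "clinear (\<lambda>_. 0)" by (simp add: clinear_def cscale_def)
lemma clinear_add: "clinear f \<Longrightarrow> clinear g \<Longrightarrow> clinear (\<lambda>v. f v + g v)"
  by (simp add: clinear_def cscale_def smult_add_right algebra_simps)
lemma clinear_minus: "clinear f \<Longrightarrow> clinear g \<Longrightarrow> clinear (\<lambda>v. f v - g v)"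
  by (simp add: clinear_def cscale_def smult_diff_right algebra_simps)
lemma clinear_uminus: "clinear f \<Longrightarrow> clinear (\<lambda>v. - f v)"
  by (simp add: clinear_def cscale_def algebra_simps)
lemma clinear_comp: "clinear f \<Longrightarrow> clinear g \<Longrightarrow> clinear (f \<circ> g)"
  by (simp add: clinear_def)

typedef linop = "{T :: cxs \<Rightarrow> cxs. clinear T}"
  using clinear_id by blast

setup_lifting type_definition_linop

instantiation linop :: ring_1
begin
lift_definition zero_linop :: linop is "\<lambda>_. 0" by (rule clinear_zero)
lift_definition one_linop :: linop is id by (rule clinear_id)
lift_definition plus_linop :: "linop \<Rightarrow> linop \<Rightarrow> linop" is "\<lambda>f g v. f v + g v"
  by (rule clinear_add)
lift_definition minus_linop :: "linop \<Rightarrow> linop \<Rightarrow> linop" is "\<lambda>f g v. f v - g v"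
  by (rule clinear_minus)
lift_definition uminus_linop :: "linop \<Rightarrow> linop" is "\<lambda>f v. - f v"
  by (rule clinear_uminus)
lift_definition times_linop :: "linop \<Rightarrow> linop \<Rightarrow> linop" is "\<lambda>f g. f \<circ> g"
  by (rule clinear_comp)
instance
proof
  fix a b c :: linop
  show "a * b * c = a * (b * c)" by transfer (simp add: comp_assoc)
  show "a + b + c = a + (b + c)" by transfer (simp add: add.assoc)
  show "a + b = b + a" by transfer (simp add: add.commute)
  show "0 + a = a" by transfer simp
  show "- a + a = 0" by transfer simp
  show "a - b = a + - b" by transfer simp
  show "1 * a = a" by transfer simp
  show "a * 1 = a" by transfer simp
  show "(a + b) * c = a * c + b * c" by transfer (simp add: fun_eq_iff)
  show "a * (b + c) = a * b + a * c" by transfer (simp add: fun_eq_iff clinear_def)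
  show "(0::linop) \<noteq> 1"
  proof transfer
    show "(\<lambda>_. 0::cxs) \<noteq> id" by (metis id_apply one_neq_zero)
  qed
qed
end

lift_definition sc :: "complex \<Rightarrow> linop" is "\<lambda>c. cscale c"
  by (simp add: clinear_def cscale_def smult_add_right mult.commute)

definition qpoch :: "real \<Rightarrow> real \<Rightarrow> nat \<Rightarrow> real" where
  "qpoch x q n = (\<Prod>j<n. 1 - q ^ j * x)"

definition eq_fps :: "real \<Rightarrow> linop \<Rightarrow> linop fps" where
  "eq_fps q C = Abs_fps (\<lambda>n. sc (complex_of_real (1 / qpoch q q n)) * C ^ n)"

end

theory Submission
  imports Defs
begin
unbundle fps_syntax

lemma sc_mult: "sc (a * b) = sc a * sc b"
  by transfer (auto simp: cscale_def fun_eq_iff smult_smult mult.commute)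
lemma sc_add: "sc (a + b) = sc a + sc b"
proof transfer
  fix a b :: complex
  have "[:a+b:] = [:a:]+[:b:]" by simp
  then show "cscale (a + b) = (\<lambda>v. cscale a v + cscale b v)"
    unfolding cscale_def fun_eq_iff by (metis smult_add_left)
qed
lemma sc_diff: "sc (a - b) = sc a - sc b"
proof transfer
  fix a b :: complex
  have "[:a-b:] = [:a:]-[:b:]" by simp
  then show "cscale (a - b) = (\<lambda>v. cscale a v - cscale b v)"
    unfolding cscale_def fun_eq_iff by (metis smult_diff_left)
qed
lemma sc_one: "sc 1 = 1"
  by transfer (auto simp: cscale_def fun_eq_iff one_pCons[symmetric])
lemma sc_zero: "sc 0 = 0"
  by transfer (auto simp: cscale_def fun_eq_iff)
lemma sc_comm: "sc a * T = T * sc a"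
  by transfer (auto simp: clinear_def fun_eq_iff)
lemma sc_power: "sc (a ^ n) = sc a ^ n"
  by (induction n) (auto simp: sc_one sc_mult)

lemma sc_left: "NO_MATCH (sc b) X \<Longrightarrow> X * sc a = sc a * X"
  by (simp add: sc_comm)
lemma sc_left2: "NO_MATCH (sc b) X \<Longrightarrow> X * (sc a * Y) = sc a * (X * Y)"
  by (metis mult.assoc sc_comm)
lemma sc_sc: "sc a * (sc b * Y) = sc (a * b) * Y"
  by (simp add: sc_mult mult.assoc)

lemmas sc_simps = sc_left sc_left2 sc_sc mult.assoc sc_mult[symmetric]

lemma rels:
  fixes q :: real and A B :: linop
  assumes h: "B * A = sc (complex_of_real q) * (A * B)"
  shows "(A*B) * A\<^sup>2 = sc (complex_of_real (q\<^sup>2)) * (A\<^sup>2 * (A*B))"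
    "B\<^sup>2 * (A*B) = sc (complex_of_real (q\<^sup>2)) * ((A*B) * B\<^sup>2)"
    "B\<^sup>2 * A\<^sup>2 = sc (complex_of_real (q\<^sup>2 * q\<^sup>2)) * (A\<^sup>2 * B\<^sup>2)"
    "(A*B)\<^sup>2 = sc (complex_of_real q) * (A\<^sup>2 * B\<^sup>2)"
    "(A+B)\<^sup>2 = A\<^sup>2 + sc (complex_of_real (1+q)) * (A*B) + B\<^sup>2"
proof -
  have h2: "B * (A * X) = sc (complex_of_real q) * (A * (B * X))" for X
    by (metis h mult.assoc)
  show "(A*B) * A\<^sup>2 = sc (complex_of_real (q\<^sup>2)) * (A\<^sup>2 * (A*B))"
    by (simp add: power2_eq_square h h2 sc_simps)
  show "B\<^sup>2 * (A*B) = sc (complex_of_real (q\<^sup>2)) * ((A*B) * B\<^sup>2)"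
    by (simp add: power2_eq_square h h2 sc_simps)
  show "B\<^sup>2 * A\<^sup>2 = sc (complex_of_real (q\<^sup>2 * q\<^sup>2)) * (A\<^sup>2 * B\<^sup>2)"
    by (simp add: power2_eq_square h h2 sc_simps)
  show "(A*B)\<^sup>2 = sc (complex_of_real q) * (A\<^sup>2 * B\<^sup>2)"
    by (simp add: power2_eq_square h h2 sc_simps)
  show "(A+B)\<^sup>2 = A\<^sup>2 + sc (complex_of_real (1+q)) * (A*B) + B\<^sup>2"
    by (simp add: power2_eq_square h h2 sc_simps sc_add sc_one algebra_simps)
qed

definition dil :: "real \<Rightarrow> linop fps \<Rightarrow> linop fps" where
  "dil c f = Abs_fps (\<lambda>n. sc (complex_of_real (c ^ n)) * f $ n)"

abbreviation cs :: "real \<Rightarrow> linop fps" where "cs a \<equiv> fps_const (sc (complex_of_real a))"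

lemma dil_nth[simp]: "dil c f $ n = sc (complex_of_real (c ^ n)) * f $ n"
  by (simp add: dil_def)

lemma cs_comm: "cs a * f = f * cs a"
  by (simp add: fps_eq_iff fps_const_mult_right sc_comm)

lemma dil_mult: "dil c (f * g) = dil c f * dil c g"
proof (rule fps_ext)
  fix n
  have "dil c (f * g) $ n = (\<Sum>i=0..n. sc (complex_of_real (c ^ n)) * (f$i * g$(n-i)))"
    by (simp add: fps_mult_nth sum_distrib_left)
  also have "\<dots> = (\<Sum>i=0..n. (sc (complex_of_real (c ^ i)) * f$i) * (sc (complex_of_real (c ^ (n-i))) * g$(n-i)))"
  proof (rule sum.cong[OF refl])
    fix i assume "i \<in> {0..n}"
    then have "c ^ n = c ^ i * c ^ (n - i)" by (simp add: power_add[symmetric])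
    then show "sc (complex_of_real (c ^ n)) * (f$i * g$(n-i)) = (sc (complex_of_real (c ^ i)) * f$i) * (sc (complex_of_real (c ^ (n-i))) * g$(n-i))"
      by (simp add: sc_mult mult.assoc sc_left2)
  qed
  also have "\<dots> = (dil c f * dil c g) $ n" by (simp add: fps_mult_nth)
  finally show "dil c (f * g) $ n = (dil c f * dil c g) $ n" .
qed

lemma dil_const: "dil c (fps_const C) = fps_const C"
  by (rule fps_ext) (simp add: sc_one)

lemma dil_X: "dil c fps_X = cs c * fps_X"
  by (rule fps_ext) (simp add: fps_X_def)

lemma dil_add: "dil c (f + g) = dil c f + dil c g"
  by (rule fps_ext) (simp add: distrib_left)

lemma dil_diff: "dil c (f - g) = dil c f - dil c g"
  by (rule fps_ext) (simp add: right_diff_distrib)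

lemma dil_dil: "dil c (dil d f) = dil (c * d) f"
  by (rule fps_ext) (simp add: sc_sc power_mult_distrib mult.commute)

lemma qpoch_Suc: "qpoch p p (Suc n) = qpoch p p n * (1 - p ^ Suc n)"
  by (simp add: qpoch_def)

lemma qpoch_nz: assumes "\<bar>p\<bar> < 1" shows "qpoch p p n \<noteq> 0"
proof -
  have "\<bar>p ^ Suc j\<bar> < 1" for j
  proof -
    have "\<bar>p\<bar> ^ Suc j < 1" using assms by (subst power_less_one_iff) auto
    then show ?thesis by (simp only: power_abs)
  qed
  then have "1 - p ^ j * p \<noteq> 0" for j
    by (metis abs_one less_irrefl power_Suc2 right_minus_eq)
  then show ?thesis by (simp add: qpoch_def)
qed

lemma step_aux:
  assumes "x = y * x + z"
  shows "sc x * C ^ Suc m = sc y * (sc x * C ^ Suc m) + C * (sc z * C ^ m)"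
proof -
  have "sc x * C ^ Suc m = sc (y * x) * C ^ Suc m + sc z * C ^ Suc m"
    by (subst assms) (simp add: sc_add distrib_right)
  also have "\<dots> = sc y * (sc x * C ^ Suc m) + C * (sc z * C ^ m)"
    by (simp add: sc_mult mult.assoc power_Suc) (metis mult.assoc sc_comm)
  finally show ?thesis .
qed

lemma e_ode:
  assumes "\<bar>p\<bar> < 1"
  shows "eq_fps p C = dil p (eq_fps p C) + fps_X * (fps_const C * eq_fps p C)"
proof (rule fps_ext)
  fix n
  show "eq_fps p C $ n = (dil p (eq_fps p C) + fps_X * (fps_const C * eq_fps p C)) $ n"
  proof (cases n)
    case 0 then show ?thesis by (simp add: eq_fps_def qpoch_def sc_one)
  next
    case (Suc m)
    have nz: "qpoch p p m \<noteq> 0" "1 - p ^ Suc m \<noteq> 0"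
      using qpoch_nz[OF assms, of m] qpoch_nz[OF assms, of "Suc m"] by (auto simp: qpoch_Suc)
    have "1 / qpoch p p (Suc m) = p ^ Suc m * (1 / qpoch p p (Suc m)) + 1 / qpoch p p m"
      using nz by (simp add: qpoch_Suc field_simps)
    then have "complex_of_real (1 / qpoch p p (Suc m)) = complex_of_real (p ^ Suc m) * complex_of_real (1 / qpoch p p (Suc m)) + complex_of_real (1 / qpoch p p m)"
      by (metis of_real_add of_real_mult)
    from step_aux[OF this, of C m] have "sc (complex_of_real (1 / qpoch p p (Suc m))) * C ^ Suc m =
      sc (complex_of_real (p ^ Suc m)) * (sc (complex_of_real (1 / qpoch p p (Suc m))) * C ^ Suc m)
      + C * (sc (complex_of_real (1 / qpoch p p m)) * C ^ m)" .
    then show ?thesis using Suc by (simp add: eq_fps_def)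
  qed
qed

lemma e_comm: "fps_const C * eq_fps p C = eq_fps p C * fps_const C"
  by (rule fps_ext) (simp add: eq_fps_def fps_const_mult_right sc_left2 power_commutes mult.assoc)

lemma pow_twist:
  assumes "R * P = sc (complex_of_real Q) * (P * R)"
  shows "R * P ^ n = sc (complex_of_real (Q ^ n)) * (P ^ n * R)"
proof (induction n)
  case 0 then show ?case by (simp add: sc_one)
next
  case (Suc n)
  have "R * P ^ Suc n = (R * P) * P ^ n" by (simp add: power_Suc mult.assoc)
  also have "\<dots> = sc (complex_of_real Q) * (P * (R * P ^ n))" by (simp add: assms mult.assoc)
  also have "\<dots> = sc (complex_of_real (Q ^ Suc n)) * (P ^ Suc n * R)"
    by (simp add: Suc sc_left2 sc_sc power_Suc mult.assoc mult.commute)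
  finally show ?case .
qed

lemma e_twist:
  assumes "R * P = sc (complex_of_real Q) * (P * R)"
  shows "fps_const R * eq_fps p P = dil Q (eq_fps p P) * fps_const R"
  by (rule fps_ext) (simp add: eq_fps_def fps_const_mult_right pow_twist[OF assms] sc_left2 sc_sc mult.assoc mult.commute)

lemma e_unique:
  assumes p: "\<bar>p\<bar> < 1" and G0: "G $ 0 = 1"
    and eq: "G - dil p G = fps_X * (fps_const C * G)"
  shows "G = eq_fps p C"
proof -
  have "G $ n = sc (complex_of_real (1 / qpoch p p n)) * C ^ n" for n
  proof (induction n)
    case 0 then show ?case using G0 by (simp add: qpoch_def sc_one)
  next
    case (Suc m)
    have nz: "qpoch p p m \<noteq> 0" "1 - p ^ Suc m \<noteq> 0"
      using qpoch_nz[OF p, of m] qpoch_nz[OF p, of "Suc m"] by (auto simp: qpoch_Suc)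
    define d where "d = complex_of_real (1 - p ^ Suc m)"
    define b where "b = complex_of_real (1 / qpoch p p m)"
    have dnz: "d \<noteq> 0" using nz(2) unfolding d_def of_real_eq_0_iff .
    have e: "G$(Suc m) - sc (complex_of_real (p^Suc m)) * G$(Suc m) = C * G$m"
      using arg_cong[OF eq, of "\<lambda>f. f $ Suc m"] by simp
    have e2: "sc d * G$(Suc m) = C * (sc b * C ^ m)"
    proof -
      have "sc d * G$(Suc m) = G$(Suc m) - sc (complex_of_real (p^Suc m)) * G$(Suc m)"
        unfolding d_def of_real_diff of_real_1 sc_diff sc_one by (simp add: left_diff_distrib)
      also have "\<dots> = C * G$m" by (rule e)
      also have "\<dots> = C * (sc b * C ^ m)" using Suc by (simp add: b_def)
      finally show ?thesis .
    qed
    have "G$(Suc m) = sc (1/d) * (sc d * G$(Suc m))"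
    proof -
      have "sc (1/d) * (sc d * G$(Suc m)) = sc (1/d * d) * G$(Suc m)"
        by (simp only: sc_mult mult.assoc)
      also have "1/d * d = 1" using dnz by simp
      finally show ?thesis by (simp only: sc_one mult_1_left)
    qed
    also have "\<dots> = sc (1/d * b) * C ^ Suc m"
    proof -
      have "C * (sc b * C ^ m) = sc b * (C * C ^ m)" by (metis mult.assoc sc_comm)
      then show ?thesis unfolding e2 by (simp only: sc_mult mult.assoc power_Suc)
    qed
    also have "1/d * b = complex_of_real (1 / qpoch p p (Suc m))"
    proof -
      have "1/d * b = complex_of_real (1/(1-p^Suc m) * (1/qpoch p p m))"
        by (simp only: d_def b_def of_real_mult of_real_divide of_real_1)
      also have "1/(1-p^Suc m) * (1/qpoch p p m) = 1 / qpoch p p (Suc m)"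
        unfolding qpoch_Suc by (metis (no_types) divide_divide_eq_left mult.commute times_divide_eq_right mult_1_right)
      finally show ?thesis .
    qed
    finally show ?case .
  qed
  then show ?thesis by (simp add: fps_eq_iff eq_fps_def)
qed

lemma X_left: "NO_MATCH fps_X f \<Longrightarrow> NO_MATCH (fps_const c) f \<Longrightarrow> f * fps_X = fps_X * (f :: linop fps)"
  by (simp add: fps_mult_fps_X_commute)
lemma X_left2: "NO_MATCH fps_X f \<Longrightarrow> NO_MATCH (fps_const c) f \<Longrightarrow> f * (fps_X * g) = fps_X * (f * (g :: linop fps))"
  by (metis fps_mult_fps_X_commute mult.assoc)
lemma csc_comm: "fps_const (sc a) * f = f * fps_const (sc a)"
  by (simp add: fps_eq_iff fps_const_mult_right sc_comm)
lemma cs_left: "NO_MATCH (fps_const c) f \<Longrightarrow> f * fps_const (sc a) = fps_const (sc a) * f"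
  by (simp add: csc_comm)
lemma cs_left2: "NO_MATCH (fps_const c) f \<Longrightarrow> f * (fps_const (sc a) * g) = fps_const (sc a) * (f * g)"
  by (metis csc_comm mult.assoc)
lemma cs_cs: "fps_const (sc a) * (fps_const (sc b) * g) = fps_const (sc (a * b)) * g"
  by (simp add: mult.assoc[symmetric] sc_mult)
lemma cs_cs': "fps_const (sc a) * fps_const (sc b) = fps_const (sc (a * b))"
  by (simp add: sc_mult)

lemmas central_simps = X_left X_left2 cs_left cs_left2 cs_cs cs_cs' mult.assoc

lemma main:
  fixes q :: real and A B :: linop
  assumes q: "\<bar>q\<bar> < 1"
    and h: "B * A = sc (complex_of_real q) * (A * B)"
  shows "eq_fps (q\<^sup>2) ((A + B)\<^sup>2) = eq_fps (q\<^sup>2) (A\<^sup>2) * eq_fps q (A * B) * eq_fps (q\<^sup>2) (B\<^sup>2)"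
proof -
  define Q where "Q = q\<^sup>2"
  have Q: "\<bar>Q\<bar> < 1" using q by (simp add: Q_def abs_square_less_1)
  note r = rels[OF h, folded Q_def]
  define P where "P = A\<^sup>2"
  define R where "R = A * B"
  define S where "S = B\<^sup>2"
  define F1 where "F1 = eq_fps Q P"
  define F2 where "F2 = eq_fps q R"
  define F3 where "F3 = eq_fps Q S"
  define E1 where "E1 = dil Q F1"
  define E2 where "E2 = dil Q F2"
  define D3 where "D3 = dil Q F3"
  define P' where "P' = fps_const P"
  define R' where "R' = fps_const R"
  define S' where "S' = fps_const S"
  have Xc: "f * fps_X = fps_X * f" for f :: "linop fps" by (simp add: fps_mult_fps_X_commute)
  have a: "F1 = E1 + fps_X * (P' * F1)" unfolding F1_def E1_def P'_def by (rule e_ode[OF Q])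
  have b: "F3 = D3 + fps_X * (F3 * S')" unfolding F3_def D3_def S'_def 
    by (subst e_comm[symmetric]) (rule e_ode[OF Q])
  have c: "F2 = dil q F2 + fps_X * (R' * F2)" unfolding F2_def R'_def by (rule e_ode[OF q])
  have PE1: "P' * E1 = E1 * P'"
    unfolding P'_def E1_def F1_def
    by (metis dil_mult dil_const e_comm)
  have RF1: "R' * F1 = E1 * R'" unfolding R'_def F1_def E1_def P_def R_def
    by (rule e_twist) (simp add: r Q_def)
  have SF2: "S' * F2 = E2 * S'" unfolding S'_def F2_def E2_def S_def R_def
    by (rule e_twist) (simp add: r Q_def)
  have SF1: "S' * F1 = dil (Q * Q) F1 * S'" unfolding S'_def F1_def S_def P_def
    by (rule e_twist) (simp add: r Q_def)
  have E1Q: "dil (Q * Q) F1 = E1 - cs Q * (fps_X * (P' * E1))"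
  proof -
    have "E1 = dil Q E1 + dil Q (fps_X * (P' * F1))" unfolding E1_def
      by (subst a) (simp add: dil_add E1_def)
    also have "dil Q (fps_X * (P' * F1)) = cs Q * (fps_X * (P' * E1))"
      by (simp add: dil_mult dil_X P'_def dil_const E1_def mult.assoc)
    finally show ?thesis unfolding E1_def dil_dil by (simp add: eq_diff_eq)
  qed
  have E2e: "E2 = F2 - cs (1+q) * (fps_X * (R' * F2)) + cs q * (fps_X * (fps_X * (R' * (R' * F2))))"
  proof -
    have d1: "dil q F2 = F2 - fps_X * (R' * F2)" using c by (simp add: eq_diff_eq)
    have "E2 = dil q (dil q F2)" unfolding E2_def dil_dil Q_def by (simp add: power2_eq_square)
    also have "\<dots> = dil q (F2 - fps_X * (R' * F2))" by (simp only: d1)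
    also have "\<dots> = dil q F2 - cs q * (fps_X * (R' * dil q F2))"
      by (simp add: dil_diff dil_mult dil_X R'_def dil_const mult.assoc)
    also have "\<dots> = F2 - cs (1+q) * (fps_X * (R' * F2)) + cs q * (fps_X * (fps_X * (R' * (R' * F2))))"
      unfolding d1 by (simp add: algebra_simps sc_add sc_one fps_const_add[symmetric] central_simps)
    finally show ?thesis .
  qed
  have RR: "R' * R' = cs q * (P' * S')"
  proof -
    have RR0: "R * R = sc (complex_of_real q) * (P * S)" unfolding R_def P_def S_def
      using r(4) by (simp only: power2_eq_square)
    show ?thesis by (simp add: R'_def P'_def S'_def RR0)
  qed
  have SF3: "S' * F3 = F3 * S'" unfolding S'_def F3_def by (rule e_comm)
  define G where "G = F1 * F2 * F3"
  have LHS: "G - dil Q G = F1*(F2*F3) - E1*(E2*F3) + fps_X*(E1*(E2*(F3*S')))"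
  proof -
    have "dil Q G = E1 * (E2 * D3)" by (simp add: G_def dil_mult E1_def E2_def D3_def mult.assoc)
    also have "D3 = F3 - fps_X * (F3 * S')" using b by (simp add: eq_diff_eq)
    finally show ?thesis by (simp add: G_def algebra_simps central_simps)
  qed
  define T' where "T' = P' + cs (1+q) * R' + S'"
  have t1: "fps_X*(P'*(F1*(F2*F3))) = (F1 - E1)*(F2*F3)"
  proof -
    have "F1 - E1 = fps_X*(P'*F1)" using a by (simp add: diff_eq_eq add.commute)
    then show ?thesis by (simp add: mult.assoc)
  qed
  have t2: "R'*(F1*(F2*F3)) = E1*(R'*(F2*F3))" by (simp add: mult.assoc[symmetric] RF1)
  have t3: "S'*(F1*(F2*F3)) = (E1 - cs Q*(fps_X*(P'*E1)))*(E2*(F3*S'))"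
  proof -
    have "S'*(F1*(F2*F3)) = dil (Q*Q) F1 * (S' * (F2 * F3))" by (simp add: mult.assoc[symmetric] SF1)
    also have "S' * (F2 * F3) = E2 * (F3 * S')" by (simp add: mult.assoc[symmetric] SF2) (simp add: mult.assoc SF3)
    finally show ?thesis by (simp add: E1Q)
  qed
  have RHS: "fps_X*(T'*G) = F1*(F2*F3) - E1*(F2*F3) + cs(1+q)*(fps_X*(E1*(R'*(F2*F3))))
     + fps_X*(E1*(E2*(F3*S'))) - cs Q*(fps_X*(fps_X*(P'*(E1*(E2*(F3*S'))))))"
  proof -
    have "fps_X*(T'*G) = fps_X*(P'*(F1*(F2*F3))) + cs(1+q)*(fps_X*(R'*(F1*(F2*F3)))) + fps_X*(S'*(F1*(F2*F3)))"
      by (simp add: T'_def G_def algebra_simps central_simps)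
    also have "\<dots> = (F1 - E1)*(F2*F3) + cs(1+q)*(fps_X*(E1*(R'*(F2*F3)))) + fps_X*((E1 - cs Q*(fps_X*(P'*E1)))*(E2*(F3*S')))"
      by (simp only: t1 t2 t3)
    also have "\<dots> = F1*(F2*F3) - E1*(F2*F3) + cs(1+q)*(fps_X*(E1*(R'*(F2*F3))))
     + fps_X*(E1*(E2*(F3*S'))) - cs Q*(fps_X*(fps_X*(P'*(E1*(E2*(F3*S'))))))"
      by (simp add: algebra_simps central_simps)
    finally show ?thesis .
  qed
  have key: "E1*(E2*F3) = E1*(F2*F3) - cs(1+q)*(fps_X*(E1*(R'*(F2*F3)))) + cs Q*(fps_X*(fps_X*(P'*(E1*(E2*(F3*S'))))))"
  proof -
    have k1: "E1*(R'*(R'*(F2*F3))) = cs q * (P'*(E1*(E2*(F3*S'))))"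
    proof -
      have "E1*(R'*(R'*(F2*F3))) = E1*((R'*R')*(F2*F3))" by (simp add: mult.assoc)
      also have "\<dots> = cs q * ((E1*P')*(S'*(F2*F3)))" by (simp add: RR central_simps)
      also have "S' * (F2 * F3) = E2 * (F3 * S')" by (simp add: mult.assoc[symmetric] SF2) (simp add: mult.assoc SF3)
      finally show ?thesis by (simp add: PE1[symmetric] mult.assoc)
    qed
    have "E1*(E2*F3) = E1*(F2*F3) - cs(1+q)*(fps_X*(E1*(R'*(F2*F3)))) + cs q*(fps_X*(fps_X*(E1*(R'*(R'*(F2*F3))))))"
      by (subst E2e) (simp add: algebra_simps central_simps)
    also have "\<dots> = E1*(F2*F3) - cs(1+q)*(fps_X*(E1*(R'*(F2*F3)))) + cs Q*(fps_X*(fps_X*(P'*(E1*(E2*(F3*S'))))))"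
      by (simp only: k1) (simp add: central_simps Q_def power2_eq_square)
    finally show ?thesis .
  qed
  have ode: "G - dil Q G = fps_X * (T' * G)"
    unfolding LHS RHS key by (simp add: algebra_simps)
  have G0: "G $ 0 = 1"
    by (simp add: G_def F1_def F2_def F3_def eq_fps_def fps_mult_nth qpoch_def sc_one)
  have T'e: "T' = fps_const ((A + B)\<^sup>2)"
    by (simp add: T'_def r(5) P'_def R'_def S'_def P_def R_def S_def fps_const_add)
  have "G = eq_fps Q ((A + B)\<^sup>2)"
    by (rule e_unique[OF Q G0]) (simp add: ode T'e)
  then show ?thesis by (simp add: G_def F1_def F2_def F3_def P_def R_def S_def Q_def)
qed

theorem lemma1p1:
  fixes q :: real and A B :: linop
  assumes "\<bar>q\<bar> < 1"
    and "B * A = sc (complex_of_real q) * (A * B)"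
  shows "eq_fps (q\<^sup>2) ((A + B)\<^sup>2) = eq_fps (q\<^sup>2) (A\<^sup>2) * eq_fps q (A * B) * eq_fps (q\<^sup>2) (B\<^sup>2)"
  using main[OF assms] .

end
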